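(* In Algorithm 6 (described in the context), assume each function $h_{A_i}$ is non-increasing. Then the values $z_1,\dots,z_s$ obtained in its second round form an optimal solution of the minimax problem $$\min_{q_1,\dots,q_s}\ \max_{1\leq i\leq s}h_{A_i}(q_i)\quad\text{s.t.}\quad \sum_{i=1}^sq_i\leq 2z,\quad q_i\in\{0,1,\dots,z\}\ (i=1,\dots,s).$$
   Context: For $A=\{(x_1,y_1),\dots,(x_l,y_l)\}\subset\mathbb{R}^2$ with $x_1<\dots<x_l$, the piecewise function $h_A:[x_1,\infty)\to\mathbb{R}$ is $h_A(x)=y_i$ for $x_i\leq x<x_{i+1}$ ($x_{l+1}=\infty$). Pairs are compared lexicographically: $(a,b)\prec(a',b')$ iff $a<a'$, or $a=a'$ and $b<b'$. Let $z\geq1$ be an integer, $[z]=\{0,1,\dots,z\}$, and $\Gamma=\{2^r:1\leq r\leq\lfloor\log_2z\rfloor, r\in\mathbb{Z}\}\cup\{0,z\}$. In Algorithm 6 (a two-round distributed coreset construction for $k$-center clustering with $z$ outliers over $s$ sites), each site $i$ computes real numbers $\tilde r_{i,q}$ for $q\in\Gamma$ and sends $h_{A_i}$, where $A_i=\{(q,\tilde r_{i,q}):q\in\Gamma\}$. The server sorts the $s(z+1)$ pairs $(h_{A_i}(q),i)$, $i\in\{1,\dots,s\}$, $q\in[z]$, in lexicographically decreasing order and selects the $(2z+1)$-th largest pair $(h_{A_{i_0}}(q_0),i_0)$. Then for $i\neq i_0$, $z_i=\min\{q\in[z]:(h_{A_i}(q),i)\prec(h_{A_{i_0}}(q_0),i_0)\}$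 (with $z_i=z$ if this set is empty), and $z_{i_0}=\min\{q\in\Gamma:h_{A_{i_0}}(q)=h_{A_{i_0}}(q_0)\}$. *)

theory Defs
  imports Complex_Main "HOL-Library.Product_Lexorder"
begin

definition Gamma :: "nat \<Rightarrow> nat set" where
  "Gamma z = {2 ^ r | r. 1 \<le> r \<and> int r \<le> \<lfloor>log 2 (real z)\<rfloor>} \<union> {0, z}"

text \<open>Piecewise-constant function h_A for a finite set A of points with distinct
  first coordinates: h_A(x) = y_i for x_i <= x < x_{i+1}.\<close>
definition hfun :: "(real \<times> real) set \<Rightarrow> real \<Rightarrow> real" where
  "hfun A x = (THE y. \<exists>xi. (xi, y) \<in> A \<and> xi \<le> x \<and>
                   (\<forall>(x', y') \<in> A. x' \<le> x \<longrightarrow> x' \<le> xi))"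

definition Aset :: "nat \<Rightarrow> (nat \<Rightarrow> nat \<Rightarrow> real) \<Rightarrow> nat \<Rightarrow> (real \<times> real) set" where
  "Aset z r i = (\<lambda>q. (real q, r i q)) ` Gamma z"

definition lex_less :: "real \<times> nat \<Rightarrow> real \<times> nat \<Rightarrow> bool" where
  "lex_less p p' \<longleftrightarrow> fst p < fst p' \<or> (fst p = fst p' \<and> snd p < snd p')"

definition pairs_list :: "nat \<Rightarrow> nat \<Rightarrow> (nat \<Rightarrow> nat \<Rightarrow> real) \<Rightarrow> (real \<times> nat) list" where
  "pairs_list z s r = [(hfun (Aset z r i) (real q), i). i \<leftarrow> [1..<s+1], q \<leftarrow> [0..<z+1]]"

definition selected_pair :: "nat \<Rightarrow> nat \<Rightarrow> (nat \<Rightarrow> nat \<Rightarrow> real) \<Rightarrow> real \<times> nat" where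
  "selected_pair z s r = rev (sort (pairs_list z s r)) ! (2 * z)"

definition zval :: "nat \<Rightarrow> nat \<Rightarrow> (nat \<Rightarrow> nat \<Rightarrow> real) \<Rightarrow> nat \<Rightarrow> nat" where
  "zval z s r i =
     (let (v0, i0) = selected_pair z s r in
      if i = i0 then Min {q \<in> Gamma z. hfun (Aset z r i0) (real q) = v0}
      else (let S = {q \<in> {0..z}. lex_less (hfun (Aset z r i) (real q), i) (v0, i0)}
            in if S = {} then z else Min S))"

end

theory Submission
  imports Defs
begin


lemma abstract_opt:
  fixes f :: "nat \<Rightarrow> nat \<Rightarrow> real" and v0 :: real and i0 s z :: nat and zv :: "nat \<Rightarrow> nat"
  assumes i0: "i0 \<in> {1..s}"
  and mono: "\<And>i q q'. i \<in> {1..s} \<Longrightarrow> q \<le> q' \<Longrightarrow> f i q' \<le> f i q"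
  and gt: "(\<Sum>i\<in>{1..s}. card {q\<in>{0..z}. (v0,i0) < (f i q, i)}) \<le> 2*z"
  and ge: "2*z+1 \<le> (\<Sum>i\<in>{1..s}. card {q\<in>{0..z}. (v0,i0) \<le> (f i q, i)})"
  and z0: "zv i0 \<le> z" "f i0 (zv i0) = v0" "\<And>q. q < zv i0 \<Longrightarrow> v0 < f i0 q"
  and zo: "\<And>i. i \<noteq> i0 \<Longrightarrow> zv i = (let S = {q\<in>{0..z}. (f i q, i) < (v0,i0)} in if S = {} then z else Min S)"
  shows "(\<forall>i\<in>{1..s}. zv i \<in> {0..z})
       \<and> (\<Sum>i\<in>{1..s}. zv i) \<le> 2 * z
       \<and> (\<forall>q :: nat \<Rightarrow> nat. (\<forall>i\<in>{1..s}. q i \<in> {0..z}) \<longrightarrow> (\<Sum>i\<in>{1..s}. q i) \<le> 2 * z \<longrightarrow>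
            Max ((\<lambda>i. f i (zv i)) ` {1..s}) \<le> Max ((\<lambda>i. f i (q i)) ` {1..s}))"
proof -
  have pl: "\<And>a b (i::nat) j. ((a::real), i) < (b, j) \<longleftrightarrow> a < b \<or> a = b \<and> i < j"
    by (auto simp: less_prod_def)
  have ple: "\<And>a b (i::nat) j. ((a::real), i) \<le> (b, j) \<longleftrightarrow> a < b \<or> a = b \<and> i \<le> j"
    by (auto simp: less_eq_prod_def)
  have nlt: "\<And>a i. i \<noteq> i0 \<Longrightarrow> \<not> (a,i) < (v0,i0) \<Longrightarrow> (v0,i0) < ((a::real),i)"
    by (metis neq_iff prod.inject)
  define S where "S i = {q\<in>{0..z}. (f i q, i) < (v0,i0)}" for i
  have zo': "zv i = (if S i = {} then z else Min (S i))" if "i \<noteq> i0" for i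
    using zo[OF that] by (simp only: S_def Let_def)
  have A: "zv i \<le> z" for i
  proof (cases "i = i0")
    case True then show ?thesis using z0 by simp
  next
    case False
    show ?thesis
    proof (cases "S i = {}")
      case True then show ?thesis using zo'[OF False] by simp
    next
      case ne: False
      have "Min (S i) \<in> S i" using ne by (intro Min_in) (auto simp: S_def)
      then show ?thesis using zo'[OF False] ne by (simp add: S_def)
    qed
  qed
  have B: "zv i \<le> card {q\<in>{0..z}. (v0,i0) < (f i q, i)}" if iI: "i \<in> {1..s}" for i
  proof (cases "i = i0")
    case True
    have "{0..<zv i} \<subseteq> {q\<in>{0..z}. (v0,i0) < (f i q, i)}"
      using z0 True by (auto simp: pl)
    from card_mono[OF _ this] show ?thesis by simp
  next
    case False
    show ?thesis
    proof (cases "S i = {}")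
      case True
      have "{0..<z} \<subseteq> {q\<in>{0..z}. (v0,i0) < (f i q, i)}"
      proof
        fix q assume q: "q \<in> {0..<z}"
        then have "q \<notin> S i" using True by simp
        then have "\<not> (f i q, i) < (v0,i0)" using q by (simp add: S_def del: less_prod_simp)
        then show "q \<in> {q\<in>{0..z}. (v0,i0) < (f i q, i)}" using nlt[OF False] q by auto
      qed
      from card_mono[OF _ this] show ?thesis using zo'[OF False] True by simp
    next
      case ne: False
      have fin: "finite (S i)" by (simp add: S_def)
      have "{0..<Min (S i)} \<subseteq> {q\<in>{0..z}. (v0,i0) < (f i q, i)}"
      proof
        fix q assume q: "q \<in> {0..<Min (S i)}"
        have "Min (S i) \<in> S i" using ne fin by simp
        then have "Min (S i) \<le> z" by (simp add: S_def)
        moreover have "q \<notin> S i" using q Min_le[OF fin] by force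
        ultimately show "q \<in> {q\<in>{0..z}. (v0,i0) < (f i q, i)}"
        proof -
          have "\<not> (f i q, i) < (v0,i0)" using \<open>q \<notin> S i\<close> \<open>Min (S i) \<le> z\<close> q by (simp add: S_def del: less_prod_simp)
          then show ?thesis using nlt[OF False] q \<open>Min (S i) \<le> z\<close> by auto
        qed
      qed
      from card_mono[OF _ this] show ?thesis using zo'[OF False] ne by simp
    qed
  qed
  have C: "(\<Sum>i\<in>{1..s}. zv i) \<le> 2 * z"
  proof -
    have "(\<Sum>i\<in>{1..s}. zv i) \<le> (\<Sum>i\<in>{1..s}. card {q\<in>{0..z}. (v0,i0) < (f i q, i)})"
      by (rule sum_mono) (rule B)
    then show ?thesis using gt by linarith
  qed
  have D: "Max ((\<lambda>i. f i (zv i)) ` {1..s}) \<le> Max ((\<lambda>i. f i (q i)) ` {1..s})"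
    if qz: "\<forall>i\<in>{1..s}. q i \<in> {0..z}" and qs: "(\<Sum>i\<in>{1..s}. q i) \<le> 2 * z" for q :: "nat \<Rightarrow> nat"
  proof -
    let ?M = "Max ((\<lambda>i. f i (q i)) ` {1..s})"
    have Mge: "f i (q i) \<le> ?M" if "i \<in> {1..s}" for i
      using that by (intro Max_ge) auto
    have key: "\<exists>j\<in>{1..s}. v0 \<le> f j (q j)"
    proof (rule ccontr)
      assume "\<not> ?thesis"
      then have lt: "f j (q j) < v0" if "j \<in> {1..s}" for j using that by force
      have "card {q'\<in>{0..z}. (v0,i0) \<le> (f j q', j)} \<le> q j" if j: "j \<in> {1..s}" for j
      proof -
        have "{q'\<in>{0..z}. (v0,i0) \<le> (f j q', j)} \<subseteq> {0..<q j}"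
        proof
          fix q' assume q': "q' \<in> {q'\<in>{0..z}. (v0,i0) \<le> (f j q', j)}"
          show "q' \<in> {0..<q j}"
          proof (rule ccontr)
            assume "q' \<notin> {0..<q j}"
            then have "f j q' \<le> f j (q j)" using mono[OF j] by simp
            then show False using lt[OF j] q' by (auto simp: ple)
          qed
        qed
        from card_mono[OF _ this] show ?thesis by simp
      qed
      then have "(\<Sum>j\<in>{1..s}. card {q'\<in>{0..z}. (v0,i0) \<le> (f j q', j)}) \<le> (\<Sum>j\<in>{1..s}. q j)"
        by (rule sum_mono)
      then show False using ge qs by linarith
    qed
    then obtain j where j: "j \<in> {1..s}" "v0 \<le> f j (q j)" by blast
    have v0M: "v0 \<le> ?M" using Mge[OF j(1)] j(2) by linarith
    show ?thesis
    proof (subst Max_le_iff, simp, use i0 in force, safe)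
      fix i assume iI: "i \<in> {1..s}"
      show "f i (zv i) \<le> ?M"
      proof (cases "i = i0")
        case True then show ?thesis using z0 v0M by simp
      next
        case False
        show ?thesis
        proof (cases "S i = {}")
          case True
          have "f i z \<le> f i (q i)" using mono[OF iI] qz iI by auto
          then show ?thesis using zo'[OF False] True Mge[OF iI] by simp
        next
          case ne: False
          have "Min (S i) \<in> S i" using ne by (intro Min_in) (auto simp: S_def)
          then have "f i (Min (S i)) \<le> v0" by (auto simp: S_def pl)
          then show ?thesis using zo'[OF False] ne v0M by simp
        qed
      qed
    qed
  qed
  show ?thesis using A C D by auto
qed



lemma Gamma_sub: assumes "z \<ge> 1" shows "Gamma z \<subseteq> {0..z}"
proof
  fix g assume "g \<in> Gamma z"
  then consider "g = 0" | "g = z" | k where "g = 2^k" "int k \<le> \<lfloor>log 2 (real z)\<rfloor>"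
    unfolding Gamma_def by blast
  then show "g \<in> {0..z}"
  proof cases
    case 3
    have "real k \<le> log 2 (real z)" using 3(2) le_floor_iff by (metis of_int_of_nat_eq)
    then have "2 powr real k \<le> real z" using assms by (subst (asm) le_log_iff) auto
    then have "real (2^k) \<le> real z" by (simp add: powr_realpow)
    then show ?thesis using 3 by (simp del: of_nat_power)
  qed auto
qed

lemma Gamma_fin: assumes "z \<ge> 1" shows "finite (Gamma z)"
  using Gamma_sub[OF assms] finite_subset by blast

lemma Gamma_0: "0 \<in> Gamma z" by (simp add: Gamma_def)

lemma hfun_eval:
  assumes fin: "finite G" and g0: "0 \<in> G"
  shows "hfun ((\<lambda>g. (real g, rr g)) ` G) (real (q::nat)) = rr (Max {g\<in>G. g \<le> q})"
proof -
  let ?m = "Max {g\<in>G. g \<le> q}"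
  let ?A = "(\<lambda>g. (real g, rr g)) ` G"
  have fin': "finite {g\<in>G. g \<le> q}" using fin by simp
  have ne: "{g\<in>G. g \<le> q} \<noteq> {}" using g0 by auto
  have mm: "?m \<in> {g\<in>G. g \<le> q}" using Max_in[OF fin' ne] .
  then have m: "?m \<in> G" "?m \<le> q" by simp_all
  have mge: "g \<le> ?m" if "g \<in> G" "g \<le> q" for g
    by (rule Max_ge[OF fin']) (simp add: that)
  have mimg: "(real ?m, rr ?m) \<in> ?A" using m(1) by (rule imageI)
  show ?thesis unfolding hfun_def
  proof (rule the_equality)
    show "\<exists>xi. (xi, rr ?m) \<in> ?A \<and> xi \<le> real q \<and>
      (\<forall>(x', y')\<in>?A. x' \<le> real q \<longrightarrow> x' \<le> xi)"
    proof (intro exI[of _ "real ?m"] conjI)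
      show "(real ?m, rr ?m) \<in> ?A" by (rule mimg)
      show "real ?m \<le> real q" using m(2) by simp
      show "\<forall>(x', y')\<in>?A. x' \<le> real q \<longrightarrow> x' \<le> real ?m"
      proof
        fix p assume "p \<in> ?A"
        then obtain g where g: "g \<in> G" "p = (real g, rr g)" by blast
        show "case p of (x', y') \<Rightarrow> x' \<le> real q \<longrightarrow> x' \<le> real ?m"
          using g mge[OF g(1)] by simp
      qed
    qed
  next
    fix y assume "\<exists>xi. (xi, y) \<in> ?A \<and> xi \<le> real q \<and>
      (\<forall>(x', y')\<in>?A. x' \<le> real q \<longrightarrow> x' \<le> xi)"
    then obtain xi where A: "(xi, y) \<in> ?A" "xi \<le> real q"
      "\<forall>(x', y')\<in>?A. x' \<le> real q \<longrightarrow> x' \<le> xi" by blast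
    from A(1) obtain g where g: "g \<in> G" "xi = real g" "y = rr g" by blast
    have "real ?m \<le> xi" using bspec[OF A(3) mimg] m(2) by simp
    moreover have "g \<le> q" using A(2) g(2) by simp
    ultimately have "g = ?m" using mge[OF g(1)] g(2) by simp
    then show "y = rr ?m" using g by simp
  qed
qed

lemma count_list:
  "length (filter P (pairs_list z s r)) =
   (\<Sum>i\<in>{1..s}. card {q\<in>{0..z}. P (hfun (Aset z r i) (real q), i)})"
proof -
  have "length (filter P (pairs_list z s r)) =
     sum_list (map (\<lambda>i. length (filter (\<lambda>q. P (hfun (Aset z r i) (real q), i)) [0..<z+1])) [1..<s+1])"
    by (simp del: upt_Suc add: pairs_list_def filter_concat length_concat map_map o_def filter_map)
  also have "\<dots> = (\<Sum>i\<in>{1..s}. length (filter (\<lambda>q. P (hfun (Aset z r i) (real q), i)) [0..<z+1]))"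
    by (simp only: sum_set_upt_conv_sum_list_nat[symmetric] set_upt atLeastLessThanSuc_atLeastAtMost Suc_eq_plus1[symmetric])
  also have "\<dots> = (\<Sum>i\<in>{1..s}. card {q\<in>{0..z}. P (hfun (Aset z r i) (real q), i)})"
  proof (rule sum.cong)
    fix i
    have "{k. k < length [0..<z+1] \<and> P (hfun (Aset z r i) (real ([0..<z+1] ! k)), i)}
       = {q\<in>{0..z}. P (hfun (Aset z r i) (real q), i)}" by (auto simp del: upt_Suc simp add: nth_upt)
    then show "length (filter (\<lambda>q. P (hfun (Aset z r i) (real q), i)) [0..<z+1]) = card {q\<in>{0..z}. P (hfun (Aset z r i) (real q), i)}"
      by (simp only: length_filter_conv_card)
  qed simp
  finally show ?thesis .
qed

lemma sorted_counts:
  fixes xs :: "('a::linorder) list"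
  assumes "sorted xs" "k < length xs"
  shows "length (filter (\<lambda>x. rev xs ! k < x) xs) \<le> k"
    and "k + 1 \<le> length (filter (\<lambda>x. rev xs ! k \<le> x) xs)"
proof -
  define j where "j = length xs - Suc k"
  have p: "rev xs ! k = xs ! j" using assms by (simp add: rev_nth j_def)
  have j: "j < length xs" using assms by (simp add: j_def)
  have le: "xs ! a \<le> xs ! j" if "a \<le> j" for a using assms(1) j that by (simp add: sorted_iff_nth_mono)
  have ge: "xs ! j \<le> xs ! a" if "j \<le> a" "a < length xs" for a using assms(1) that by (simp add: sorted_iff_nth_mono)
  have sp: "length (filter P xs) = length (filter P (take t xs)) + length (filter P (drop t xs))" for P t
  proof -
    have "filter P xs = filter P (take t xs) @ filter P (drop t xs)"
      by (simp only: filter_append[symmetric] append_take_drop_id)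
    then show ?thesis by simp
  qed
  have "\<forall>x\<in>set (take (Suc j) xs). \<not> xs ! j < x"
  proof
    fix x assume "x \<in> set (take (Suc j) xs)"
    then obtain a where a: "a < length (take (Suc j) xs)" "take (Suc j) xs ! a = x"
      by (auto simp: in_set_conv_nth)
    then have "a \<le> j" "x = xs ! a" by auto
    then show "\<not> xs ! j < x" using le[of a] by simp
  qed
  then have e: "filter (\<lambda>x. xs ! j < x) (take (Suc j) xs) = []" by (simp add: filter_empty_conv)
  have "length (filter (\<lambda>x. xs ! j < x) xs) = length (filter (\<lambda>x. xs ! j < x) (drop (Suc j) xs))"
    using sp[of _ "Suc j"] e by simp
  also have "\<dots> \<le> length (drop (Suc j) xs)" by (rule length_filter_le)
  also have "\<dots> = k" using assms by (simp add: j_def)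
  finally show "length (filter (\<lambda>x. rev xs ! k < x) xs) \<le> k" using p by simp
  have "\<forall>x\<in>set (drop j xs). xs ! j \<le> x"
  proof
    fix x assume "x \<in> set (drop j xs)"
    then obtain a where a: "a < length (drop j xs)" "drop j xs ! a = x"
      by (auto simp: in_set_conv_nth)
    then have "j + a < length xs" "x = xs ! (j + a)" by auto
    then show "xs ! j \<le> x" using ge[of "j+a"] by simp
  qed
  then have "filter (\<lambda>x. xs ! j \<le> x) (drop j xs) = drop j xs" by simp
  then have "length (drop j xs) \<le> length (filter (\<lambda>x. xs ! j \<le> x) xs)"
    using sp[of "\<lambda>x. xs ! j \<le> x" j] by simp
  moreover have "length (drop j xs) = k + 1" using assms by (simp add: j_def)
  ultimately show "k + 1 \<le> length (filter (\<lambda>x. rev xs ! k \<le> x) xs)" using p by simp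
qed

lemma lex_less_eq: "lex_less p p' \<longleftrightarrow> p < p'"
  by (cases p; cases p') (auto simp: lex_less_def)


lemma pairs_mem: "(v0,i0) \<in> set (pairs_list z s r) \<Longrightarrow> i0 \<in> {1..s} \<and> (\<exists>q. q \<le> z \<and> v0 = hfun (Aset z r i0) (real q))"
  apply (simp add: pairs_list_def del: upt_Suc)
  apply (elim bexE imageE)
  apply (simp add: less_Suc_eq_le)
  apply blast
  done

theorem lemma19:
  fixes z s :: nat and r :: "nat \<Rightarrow> nat \<Rightarrow> real"
  assumes hz: "z \<ge> 1"
    and hs: "s \<ge> 2"
    and noninc: "\<And>i x y. i \<in> {1..s} \<Longrightarrow> 0 \<le> x \<Longrightarrow> x \<le> y \<Longrightarrow>
                   hfun (Aset z r i) y \<le> hfun (Aset z r i) x"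
  shows "(\<forall>i\<in>{1..s}. zval z s r i \<in> {0..z})
       \<and> (\<Sum>i\<in>{1..s}. zval z s r i) \<le> 2 * z
       \<and> (\<forall>q :: nat \<Rightarrow> nat. (\<forall>i\<in>{1..s}. q i \<in> {0..z}) \<longrightarrow> (\<Sum>i\<in>{1..s}. q i) \<le> 2 * z \<longrightarrow>
            Max ((\<lambda>i. hfun (Aset z r i) (real (zval z s r i))) ` {1..s})
              \<le> Max ((\<lambda>i. hfun (Aset z r i) (real (q i))) ` {1..s}))"
proof -
  define F where "F = (\<lambda>i q. hfun (Aset z r i) (real (q::nat)))"
  define L where "L = pairs_list z s r"
  define xs where "xs = sort L"
  obtain v0 i0 where sp: "selected_pair z s r = (v0, i0)" by fastforce
  have sp': "rev xs ! (2*z) = (v0, i0)" using sp by (simp add: selected_pair_def xs_def L_def)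
  have lenL: "length L = s * (z+1)"
    using count_list[of "\<lambda>_. True" z s r] by (simp add: L_def)
  have "2*z+2 \<le> s*(z+1)" using hs mult_le_mono1[OF hs, of "z+1"] by simp
  then have klt: "2*z < length xs" using lenL by (simp add: xs_def)
  have srt: "sorted xs" by (simp add: xs_def)
  have lf: "length (filter P xs) = length (filter P L)" for P
    unfolding xs_def by (metis filter_sort length_sort)
  have gt: "(\<Sum>i\<in>{1..s}. card {q\<in>{0..z}. (v0,i0) < (F i q, i)}) \<le> 2*z"
    using sorted_counts(1)[OF srt klt] sp' lf count_list[of "\<lambda>x. (v0,i0) < x" z s r]
    by (simp add: F_def L_def)
  have ge: "2*z+1 \<le> (\<Sum>i\<in>{1..s}. card {q\<in>{0..z}. (v0,i0) \<le> (F i q, i)})"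
    using sorted_counts(2)[OF srt klt] sp' lf count_list[of "\<lambda>x. (v0,i0) \<le> x" z s r]
    by (simp add: F_def L_def)
  have "(v0,i0) \<in> set xs" using sp' klt by (metis length_rev nth_mem set_rev)
  then have "(v0,i0) \<in> set L" by (simp add: xs_def)
  then have ex: "i0 \<in> {1..s} \<and> (\<exists>q. q \<le> z \<and> v0 = F i0 q)"
    using pairs_mem[of v0 i0 z s r] by (simp add: L_def F_def)
  then obtain q0 where i0: "i0 \<in> {1..s}" and q0: "q0 \<le> z" and v0: "v0 = F i0 q0"
    by blast
  have mono: "\<And>i q q'. i \<in> {1..s} \<Longrightarrow> q \<le> q' \<Longrightarrow> F i q' \<le> F i q"
    unfolding F_def by (rule noninc) auto
  define gf where "gf q = Max {g\<in>Gamma z. g \<le> q}" for q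
  have Gfin: "finite (Gamma z)" by (rule Gamma_fin[OF hz])
  have Fgf: "F i q = r i (gf q)" for i q
    unfolding F_def gf_def Aset_def by (rule hfun_eval[OF Gfin Gamma_0])
  have fin': "finite {g\<in>Gamma z. g \<le> q}" for q using Gfin by simp
  have gfin: "gf q \<in> {g\<in>Gamma z. g \<le> q}" for q
    unfolding gf_def using Gamma_0 by (intro Max_in[OF fin']) auto
  have gfG: "gf q \<in> Gamma z" "gf q \<le> q" for q
    using gfin[of q] by auto
  have gfid: "gf g = g" if "g \<in> Gamma z" for g
    unfolding gf_def using that by (intro Max_eqI[OF fin']) auto
  have FG: "F i (gf q) = F i q" for i q using Fgf gfid[OF gfG(1)] by simp
  define T where "T = {q\<in>Gamma z. F i0 q = v0}"
  have zv_eq: "zval z s r i = (if i = i0 then Min {q \<in> Gamma z. hfun (Aset z r i0) (real q) = v0}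
     else (let S = {q \<in> {0..z}. lex_less (hfun (Aset z r i) (real q), i) (v0, i0)}
            in if S = {} then z else Min S))" for i
    unfolding zval_def sp by (simp only: Let_def prod.case)
  have zi0: "zval z s r i0 = Min T"
    unfolding zv_eq[of i0] T_def F_def by (simp only: refl if_True)
  have Tne: "gf q0 \<in> T" using gfG FG v0 by (simp add: T_def)
  have Tfin: "finite T" using Gfin by (simp add: T_def)
  have MT: "Min T \<in> T" using Min_in[OF Tfin] Tne by auto
  have z01: "zval z s r i0 \<le> z" using MT zi0 Gamma_sub[OF hz] by (auto simp: T_def)
  have z02: "F i0 (zval z s r i0) = v0" using MT zi0 by (simp add: T_def)
  have z03: "v0 < F i0 q" if "q < zval z s r i0" for q
  proof -
    have "F i0 (zval z s r i0) \<le> F i0 q" using mono[OF i0] that by simp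
    moreover have "F i0 q \<noteq> v0"
    proof
      assume "F i0 q = v0"
      then have "gf q \<in> T" using gfG FG by (simp add: T_def)
      then have "Min T \<le> gf q" using Min_le[OF Tfin] by simp
      then show False using gfG(2)[of q] that zi0 by simp
    qed
    ultimately show ?thesis using z02 by simp
  qed
  have zo: "zval z s r i = (let S = {q\<in>{0..z}. (F i q, i) < (v0,i0)} in if S = {} then z else Min S)"
    if "i \<noteq> i0" for i
    unfolding zv_eq[of i] F_def lex_less_eq by (simp only: if_not_P[OF that])
  have R: "(\<forall>i\<in>{1..s}. zval z s r i \<in> {0..z})
       \<and> (\<Sum>i\<in>{1..s}. zval z s r i) \<le> 2 * z
       \<and> (\<forall>q :: nat \<Rightarrow> nat. (\<forall>i\<in>{1..s}. q i \<in> {0..z}) \<longrightarrow> (\<Sum>i\<in>{1..s}. q i) \<le> 2 * z \<longrightarrow>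
            Max ((\<lambda>i. F i (zval z s r i)) ` {1..s}) \<le> Max ((\<lambda>i. F i (q i)) ` {1..s}))"
    by (rule abstract_opt[OF i0 mono gt ge z01 z02 z03 zo])
  then show ?thesis unfolding F_def .
qed

end
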